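(* Let $q$ be a prime power, $n\geq 3$, and let $I_n(q)$ be the bipartite graph whose vertices are the $1$-dimensional and the $(n-1)$-dimensional subspaces of an $n$-dimensional vector space over the field with $q$ elements, with a $1$-dimensional subspace adjacent to an $(n-1)$-dimensional subspace if and only if it is contained in it. Then $I_n(q)$ is (isomorphic to) a Cayley graph.
   Context: For a finite group $\Gamma$ and a subset $S\subseteq\Gamma$ that does not contain the identity, is closed under inverses, and generates $\Gamma$, the Cayley graph of $\Gamma$ with respect to $S$ has vertex set $\Gamma$ and an edge between $g$ and $h$ whenever $g^{-1}h\in S$. A graph is a Cayley graph if it is isomorphic to the Cayley graph of some such pair $(\Gamma,S)$. *)

theory Defs
  imports "HOL-Analysis.Analysis" "HOL-Algebra.Generated_Groups"
begin

text \<open>The group is taken with elements of the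
vertex type (no loss: any group isomorphic, as a graph, to V can be transported).\<close>

definition is_cayley_graph :: "'v set \<Rightarrow> ('v \<Rightarrow> 'v \<Rightarrow> bool) \<Rightarrow> bool" where
  "is_cayley_graph V E \<longleftrightarrow>
     (\<exists>(G :: 'v monoid) S f.
        group G \<and> finite (carrier G) \<and>
        S \<subseteq> carrier G \<and> \<one>\<^bsub>G\<^esub> \<notin> S \<and>
        (\<forall>s\<in>S. inv\<^bsub>G\<^esub> s \<in> S) \<and>
        generate G S = carrier G \<and>
        bij_betw f (carrier G) V \<and>
        (\<forall>g\<in>carrier G. \<forall>h\<in>carrier G.
            E (f g) (f h) \<longleftrightarrow> inv\<^bsub>G\<^esub> g \<otimes>\<^bsub>G\<^esub> h \<in> S))"

definition incidence_vertices :: "('a::field ^ 'n::finite) set set" where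
  "incidence_vertices =
     {U. vec.subspace U \<and> (vec.dim U = 1 \<or> vec.dim U = CARD('n) - 1)}"

definition incidence_adj :: "('a::field ^ 'n::finite) set \<Rightarrow> ('a ^ 'n) set \<Rightarrow> bool" where
  "incidence_adj U W \<longleftrightarrow>
     (vec.subspace U \<and> vec.subspace W) \<and>
     ((vec.dim U = 1 \<and> vec.dim W = CARD('n) - 1 \<and> U \<subseteq> W) \<or>
      (vec.dim W = 1 \<and> vec.dim U = CARD('n) - 1 \<and> W \<subseteq> U))"

end

theory Submission
  imports Defs "HOL-Algebra.Algebraic_Closure_Type" "HOL-Number_Theory.Cong"
begin

definition Cset :: "'b::zero set \<Rightarrow> nat \<Rightarrow> (nat \<Rightarrow> 'b) set" where
  "Cset R k = {c. (\<forall>i<k. c i \<in> R) \<and> (\<forall>i. k \<le> i \<longrightarrow> c i = 0)}"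

definition comb :: "(nat \<Rightarrow> 'b::comm_ring_1) \<Rightarrow> nat \<Rightarrow> (nat \<Rightarrow> 'b) \<Rightarrow> 'b" where
  "comb b k c = (\<Sum>i<k. c i * b i)"

lemma Cset_0: "Cset R 0 = {\<lambda>_. 0}"
  by (auto simp: Cset_def)

lemma Cset_Suc: "Cset R (Suc k) = (\<lambda>(c,r). c(k:=r)) ` (Cset R k \<times> R)"
proof (rule Set.set_eqI, rule iffI)
  fix c assume c: "c \<in> Cset R (Suc k)"
  have "c = (c(k:=0))(k := c k)" by simp
  moreover have "c(k:=0) \<in> Cset R k" "c k \<in> R" using c by (auto simp: Cset_def)
  ultimately show "c \<in> (\<lambda>(c,r). c(k:=r)) ` (Cset R k \<times> R)"
    by (intro image_eqI[of _ _ "(c(k:=0), c k)"]) auto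
next
  fix c assume "c \<in> (\<lambda>(c,r). c(k:=r)) ` (Cset R k \<times> R)"
  then show "c \<in> Cset R (Suc k)" by (auto simp: Cset_def)
qed

lemma card_Cset: assumes "finite R" shows "card (Cset R k) = card R ^ k \<and> finite (Cset R k)"
proof (induction k)
  case 0 then show ?case by (simp add: Cset_0)
next
  case (Suc k)
  have inj: "inj_on (\<lambda>(c,r). c(k:=r)) (Cset R k \<times> R)"
  proof (rule inj_onI, clarsimp)
    fix c r c' r' assume "c \<in> Cset R k" "c' \<in> Cset R k" and eq: "c(k := r) = c'(k := r')"
    then have "r = r'" by (metis fun_upd_same)
    moreover have "c = c'"
    proof
      fix i show "c i = c' i"
      proof (cases "i = k")
        case True then show ?thesis using \<open>c \<in> Cset R k\<close> \<open>c' \<in> Cset R k\<close> by (auto simp: Cset_def)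
      next
        case False then show ?thesis using eq by (metis fun_upd_other)
      qed
    qed
    ultimately show "c = c' \<and> r = r'" by simp
  qed
  show ?case unfolding Cset_Suc using Suc assms
    by (simp add: card_image[OF inj] card_cartesian_product)
qed

lemma comb_Suc: "comb b (Suc k) c = comb b k c + c k * b k"
  by (simp add: comb_def)

lemma comb_cong: "(\<And>i. i < k \<Longrightarrow> c i = c' i) \<Longrightarrow> (\<And>i. i < k \<Longrightarrow> b i = b' i) \<Longrightarrow> comb b k c = comb b' k c'"
  by (simp add: comb_def)

lemma comb_in:
  fixes V :: "'b::comm_ring_1 set"
  assumes "0 \<in> V" "\<And>x y. x\<in>V \<Longrightarrow> y\<in>V \<Longrightarrow> x+y\<in>V" "\<And>r x. r\<in>R \<Longrightarrow> x\<in>V \<Longrightarrow> r*x \<in> V"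
    and "\<forall>i<k. b i \<in> V" "c \<in> Cset R k"
  shows "comb b k c \<in> V"
  using assms(4,5)
proof (induction k arbitrary: c)
  case 0 then show ?case using assms(1) by (simp add: comb_def)
next
  case (Suc k)
  have "comb b k c = comb b k (c(k:=0))" by (rule comb_cong) auto
  moreover have "c(k:=0) \<in> Cset R k" using Suc.prems by (auto simp: Cset_def)
  ultimately have "comb b k c \<in> V" using Suc by simp
  moreover have "c k * b k \<in> V" using Suc.prems assms(3) by (auto simp: Cset_def)
  ultimately show ?case using assms(2) by (simp add: comb_Suc)
qed

lemma basis_ex:
  fixes R V :: "'b::field set"
  assumes finR: "finite R" and finV: "finite V"
    and R0: "0 \<in> R" and R1: "1 \<in> R" and Rdiff: "\<And>x y. x\<in>R \<Longrightarrow> y\<in>R \<Longrightarrow> x - y \<in> R"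
    and Rmult: "\<And>x y. x\<in>R \<Longrightarrow> y\<in>R \<Longrightarrow> x * y \<in> R" and Rinv: "\<And>x. x\<in>R \<Longrightarrow> inverse x \<in> R"
    and V0: "0 \<in> V" and Vadd: "\<And>x y. x\<in>V \<Longrightarrow> y\<in>V \<Longrightarrow> x+y\<in>V"
    and Vsc: "\<And>r x. r\<in>R \<Longrightarrow> x\<in>V \<Longrightarrow> r*x \<in> V"
  shows "\<exists>k b. bij_betw (comb b k) (Cset R k) V"
proof -
  define good where "good k b \<longleftrightarrow> inj_on (comb b k) (Cset R k) \<and> (\<forall>i<k. b i \<in> V)" for k b
  have sub: "comb b k ` Cset R k \<subseteq> V" if "good k b" for k b
    using comb_in[OF V0 Vadd Vsc] that by (auto simp: good_def)
  have step: "\<exists>b'. good (Suc k) b'" if g: "good k b" and ne: "comb b k ` Cset R k \<noteq> V" for k b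
  proof -
    obtain y where y: "y \<in> V" "y \<notin> comb b k ` Cset R k" using ne sub[OF g] by blast
    define b' where "b' = b(k := y)"
    have cb: "comb b' (Suc k) c = comb b k c + c k * y" for c
    proof -
      have "comb b' k c = comb b k c" by (rule comb_cong) (auto simp: b'_def)
      then show ?thesis by (simp add: comb_Suc b'_def)
    qed
    have "inj_on (comb b' (Suc k)) (Cset R (Suc k))"
    proof (rule inj_onI)
      fix c c' assume c: "c \<in> Cset R (Suc k)" and c': "c' \<in> Cset R (Suc k)"
        and eq: "comb b' (Suc k) c = comb b' (Suc k) c'"
      have ck: "c k \<in> R" "c' k \<in> R" using c c' by (auto simp: Cset_def)
      show "c = c'"
      proof (cases "c k = c' k")
        case True
        have "comb b k (c(k:=0)) = comb b k c" "comb b k (c'(k:=0)) = comb b k c'"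
          by (rule comb_cong; simp)+
        moreover have "comb b k c = comb b k c'" using eq True by (simp add: cb)
        moreover have "c(k:=0) \<in> Cset R k" "c'(k:=0) \<in> Cset R k" using c c' by (auto simp: Cset_def)
        ultimately have "c(k:=0) = c'(k:=0)" using g unfolding good_def inj_on_def by metis
        then show ?thesis using True by (metis fun_upd_triv fun_upd_upd)
      next
        case False
        define d where "d = c k - c' k"
        have d0: "d \<noteq> 0" using False by (simp add: d_def)
        have dR: "inverse d \<in> R" using ck Rdiff Rinv by (simp add: d_def)
        define e where "e i = (if i < k then (c' i - c i) * inverse d else 0)" for i
        have eC: "e \<in> Cset R k" using c c' dR Rdiff Rmult by (auto simp: Cset_def e_def)
        have "d * y = comb b k c' - comb b k c" using eq by (simp add: cb d_def algebra_simps)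
        also have "\<dots> = (\<Sum>i<k. (c' i - c i) * b i)"
          by (simp add: comb_def sum_subtractf algebra_simps)
        finally have "y = (\<Sum>i<k. (c' i - c i) * b i) * inverse d"
          using d0 by (simp add: field_simps)
        also have "\<dots> = comb b k e"
          by (simp add: comb_def e_def sum_distrib_right) (simp add: algebra_simps)
        finally have "y \<in> comb b k ` Cset R k" using eC by blast
        with y show ?thesis by blast
      qed
    qed
    moreover have "\<forall>i<Suc k. b' i \<in> V" using g y by (auto simp: good_def b'_def less_Suc_eq)
    ultimately show ?thesis by (auto simp: good_def)
  qed
  have main: "\<exists>k b. good k b \<and> (N \<le> k \<or> comb b k ` Cset R k = V)" for N
  proof (induction N)
    case 0
    have "good 0 b" for b by (simp add: good_def Cset_0)
    then show ?case by blast
  next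
    case (Suc N)
    then obtain k b where kb: "good k b" "N \<le> k \<or> comb b k ` Cset R k = V" by blast
    show ?case
    proof (cases "comb b k ` Cset R k = V")
      case True then show ?thesis using kb by blast
    next
      case False
      then have "N \<le> k" using kb by blast
      from step[OF kb(1) False] obtain b' where "good (Suc k) b'" by blast
      then show ?thesis using \<open>N \<le> k\<close> by (intro exI[of _ "Suc k"] exI[of _ b']) auto
    qed
  qed
  obtain k b where kb: "good k b" "card V + 1 \<le> k \<or> comb b k ` Cset R k = V" using main by blast
  have "comb b k ` Cset R k = V"
  proof (rule ccontr)
    assume "comb b k ` Cset R k \<noteq> V"
    then have k: "card V + 1 \<le> k" using kb by blast
    have "card R \<ge> 2"
    proof -
      have "{0,1} \<subseteq> R" using R0 R1 by auto
      then have "card {0::'b,1} \<le> card R" using finR by (intro card_mono) auto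
      then show ?thesis by simp
    qed
    have "card (comb b k ` Cset R k) = card R ^ k"
      using card_Cset[OF finR, of k] kb(1) card_image[of "comb b k" "Cset R k"] by (simp add: good_def)
    also have "\<dots> \<ge> 2 ^ k" using \<open>card R \<ge> 2\<close> by (simp add: power_mono)
    finally have "2 ^ k \<le> card (comb b k ` Cset R k)" .
    moreover have "card (comb b k ` Cset R k) \<le> card V" using sub[OF kb(1)] finV by (intro card_mono)
    moreover have "k < 2 ^ k" by (rule less_exp)
    ultimately show False using k by linarith
  qed
  then show ?thesis using kb(1) unfolding good_def bij_betw_def by blast
qed

lemma ff_pow_card:
  fixes x :: "'a :: {finite,field}"
  shows "x ^ CARD('a) = x"
proof (cases "x = 0")
  case False
  have "x * (\<Prod>y\<in>UNIV-{0}. x * y) = x * x ^ (card (UNIV :: 'a set) - 1) * \<Prod>(UNIV-{0})"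
    by (simp add: prod.distrib mult_ac)
  also have "x * x ^ (card (UNIV :: 'a set) - 1) = x ^ Suc (card (UNIV :: 'a set) - 1)"
    by (subst power_Suc) auto
  also have "Suc (card (UNIV :: 'a set) - 1) = card (UNIV :: 'a set)"
    using finite_UNIV_card_ge_0[where ?'a = 'a] by simp
  also have "(\<Prod>y\<in>UNIV-{0}. x * y) = (\<Prod>y\<in>UNIV-{0}. y)"
    by (rule prod.reindex_bij_witness[of _ "\<lambda>y. y / x" "\<lambda>y. x * y"]) (use False in auto)
  finally show ?thesis
    by simp
qed (use finite_UNIV_card_ge_0[where ?'a = 'a] in auto)

lemma ff_card_ge2: "CARD('a :: {finite,field}) \<ge> 2"
proof -
  have "{0::'a,1} \<subseteq> UNIV" by simp
  then have "card {0::'a,1} \<le> CARD('a)" by (intro card_mono) auto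
  then show ?thesis by simp
qed

lemma ff_inverse_pow:
  fixes x :: "'a :: {finite,field}"
  assumes False: "x \<noteq> 0"
  shows "inverse x = x ^ (CARD('a) - 2)"
proof -
  have q: "CARD('a) = Suc (Suc (CARD('a) - 2))" using ff_card_ge2[where 'a='a] by arith
  have "x ^ (CARD('a) - 2) * x * x = x ^ CARD('a)"
    by (subst (2) q) (simp add: mult_ac)
  then have "x * (x ^ (CARD('a) - 2) * x) = x * 1" by (simp add: ff_pow_card mult_ac)
  then have "x ^ (CARD('a) - 2) * x = 1" using False by simp
  then have "x * x ^ (CARD('a) - 2) = 1" by (simp add: mult.commute)
  then show ?thesis by (rule inverse_unique)
qed

lemma ff_CHAR_pos: "CHAR('a :: {finite,field}) > 0"
  by (simp add: finite_imp_CHAR_pos)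

lemma ff_CHAR_prime: "Factorial_Ring.prime CHAR('a :: {finite,field})"
  using ff_CHAR_pos prime_CHAR_semidom by blast

lemma ff_card_prime_power: "\<exists>m. CARD('a :: {finite,field}) = CHAR('a) ^ m"
proof -
  let ?p = "CHAR('a)"
  define R where "R = range (of_nat :: nat \<Rightarrow> 'a)"
  have p0: "?p > 0" by (rule ff_CHAR_pos)
  have neg: "- (of_nat b :: 'a) = of_nat ((?p - 1) * b)" for b
  proof -
    have "(of_nat ((?p - 1) * b) :: 'a) + of_nat b = of_nat (?p * b)"
      using p0 by (metis add.commute mult.commute of_nat_add mult_Suc_right Suc_diff_1 mult.commute)
    also have "\<dots> = 0" by simp
    finally show ?thesis by (metis add.commute add.inverse_unique)
  qed
  have Rdiff: "x - y \<in> R" if "x \<in> R" "y \<in> R" for x y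
  proof -
    obtain a b where "x = of_nat a" "y = of_nat b" using \<open>x \<in> R\<close> \<open>y \<in> R\<close> unfolding R_def by blast
    then have "x - y = of_nat a + - of_nat b" by simp
    also have "\<dots> = of_nat (a + (?p - 1) * b)" by (simp only: neg of_nat_add)
    finally have "x - y = of_nat (a + (?p - 1) * b)" .
    then show ?thesis unfolding R_def by (rule image_eqI) simp
  qed
  have Rinv: "inverse x \<in> R" if "x \<in> R" for x
  proof (cases "x = 0")
    case False then show ?thesis
      using that by (auto simp: R_def ff_inverse_pow simp flip: of_nat_power)
  qed (simp add: R_def, metis of_nat_0 rangeI)
  have Rmult: "x * y \<in> R" if "x \<in> R" "y \<in> R" for x y
    using that by (auto simp: R_def simp flip: of_nat_mult)
  obtain k b where "bij_betw (comb b k) (Cset R k) (UNIV :: 'a set)"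
  proof -
    have "0 \<in> R" "1 \<in> R" unfolding R_def by (metis of_nat_0 rangeI, metis of_nat_1 rangeI)
    then show ?thesis using that basis_ex[of R "UNIV :: 'a set", OF _ _ _ _ Rdiff Rmult Rinv] by auto
  qed
  then have "CARD('a) = card (Cset R k)" by (simp add: bij_betw_same_card)
  also have "\<dots> = card R ^ k" using card_Cset[of R k] by simp
  also have "card R = ?p"
  proof -
    have "R = of_nat ` {..<?p}"
    proof (rule Set.set_eqI, rule iffI)
      fix x assume "x \<in> R"
      then obtain a where "x = of_nat a" by (auto simp: R_def)
      then have "x = of_nat (a mod ?p)" by (simp add: of_nat_eq_iff_cong_CHAR cong_def)
      then show "x \<in> of_nat ` {..<?p}" using p0 by auto
    qed (auto simp: R_def)
    moreover have "inj_on (of_nat :: nat \<Rightarrow> 'a) {..<?p}"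
      by (rule inj_onI) (auto simp: of_nat_eq_iff_cong_CHAR cong_def)
    ultimately show ?thesis by (simp add: card_image)
  qed
  finally show ?thesis by blast
qed

lemma ac_freshman:
  fixes x y :: "'a::{finite,field} alg_closure"
  assumes "Q = CARD('a)^k"
  shows "(x+y)^Q = x^Q + y^Q"
proof -
  obtain m where m: "CARD('a) = CHAR('a)^m" using ff_card_prime_power by blast
  have "Q = CHAR('a alg_closure)^(m*k)" using assms m by (simp add: power_mult)
  moreover have "Factorial_Ring.prime CHAR('a alg_closure)" using ff_CHAR_prime[where 'a='a] by simp
  ultimately show ?thesis by (intro freshmans_dream') auto
qed

lemma ac_of_nat_card: "(of_nat CARD('a) :: 'a::{finite,field} alg_closure) = 0"
proof -
  obtain m where m: "CARD('a) = CHAR('a)^m" using ff_card_prime_power by blast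
  have "m \<noteq> 0" using m ff_card_ge2[where 'a='a] by (cases m) auto
  then have "CHAR('a) dvd CARD('a)" using m by (simp add: dvd_power)
  then have "(of_nat CARD('a) :: 'a) = 0" by (simp add: of_nat_eq_0_iff_char_dvd)
  then show ?thesis by (metis to_ac_of_nat to_ac_0)
qed

definition Kset :: "nat \<Rightarrow> 'a::field alg_closure set" where
  "Kset Q = {x. x ^ Q = x}"

context
  fixes Q k :: nat
  assumes Qk: "Q = CARD('a::{finite,field})^k" and k: "k > 0"
begin

lemma Q_pos: "Q > 0" using Qk ff_card_ge2[where 'a='a] by simp

lemma Q_ge2: "Q \<ge> 2"
proof -
  have "CARD('a) ^ 1 \<le> CARD('a) ^ k" using k ff_card_ge2[where 'a='a] by (intro power_increasing) auto
  then show ?thesis using Qk ff_card_ge2[where 'a='a] by simp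
qed

lemma K_0: "(0 :: 'a alg_closure) \<in> Kset Q" using Q_pos by (simp add: Kset_def)
lemma K_1: "(1 :: 'a alg_closure) \<in> Kset Q" by (simp add: Kset_def)
lemma K_add: "x \<in> Kset Q \<Longrightarrow> y \<in> Kset Q \<Longrightarrow> x + y \<in> (Kset Q :: 'a alg_closure set)"
  using ac_freshman[OF Qk] by (simp add: Kset_def)
lemma K_uminus: assumes "x \<in> (Kset Q :: 'a alg_closure set)" shows "- x \<in> Kset Q"
proof -
  have "(x + - x) ^ Q = x ^ Q + (- x) ^ Q" by (rule ac_freshman[OF Qk])
  then have "0 = x + (- x) ^ Q" using Q_pos assms by (simp add: Kset_def power_0_left)
  then show ?thesis by (simp add: Kset_def eq_neg_iff_add_eq_0 add.commute)
qed
lemma K_diff: "x \<in> Kset Q \<Longrightarrow> y \<in> Kset Q \<Longrightarrow> x - y \<in> (Kset Q :: 'a alg_closure set)"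
  using K_add K_uminus by (metis diff_conv_add_uminus)
lemma K_mult: "x \<in> Kset Q \<Longrightarrow> y \<in> Kset Q \<Longrightarrow> x * y \<in> (Kset Q :: 'a alg_closure set)"
  by (simp add: Kset_def power_mult_distrib)
lemma K_inverse: "x \<in> Kset Q \<Longrightarrow> inverse x \<in> (Kset Q :: 'a alg_closure set)"
  by (simp add: Kset_def power_inverse)
lemma K_divide: "x \<in> Kset Q \<Longrightarrow> y \<in> Kset Q \<Longrightarrow> x / y \<in> (Kset Q :: 'a alg_closure set)"
  by (simp add: K_mult K_inverse divide_inverse)
lemma K_to_ac: "to_ac (a::'a) \<in> Kset Q"
proof -
  have "a ^ Q = a" unfolding Qk
    by (induction k) (simp_all add: power_mult ff_pow_card)
  then show ?thesis by (simp add: Kset_def flip: to_ac_power)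
qed

lemma card_mset_le1: "(\<And>x. count A x \<le> 1) \<Longrightarrow> card (set_mset A) = size A"
proof (induction A)
  case empty then show ?case by simp
next
  case (add x A)
  have "count (add_mset x A) x \<le> 1" by (rule add.prems)
  then have "x \<notin># A" by (simp add: count_eq_zero_iff[symmetric])
  moreover have "\<And>y. count A y \<le> 1" using add.prems by (metis count_add_mset le_trans le_add1 count_add_mset Suc_leD)
  ultimately show ?case using add.IH by simp
qed

lemma card_K: "finite (Kset Q :: 'a alg_closure set) \<and> card (Kset Q :: 'a alg_closure set) = Q"
proof -
  define P :: "'a alg_closure poly" where "P = Polynomial.monom 1 Q + [:0,-1:]"
  have polyP: "poly P x = x ^ Q - x" for x by (simp add: P_def poly_monom)
  have degP: "Polynomial.degree P = Q" using Q_ge2 unfolding P_def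
    by (subst degree_add_eq_left) (auto simp: degree_monom_eq)
  have lcP: "Polynomial.lead_coeff P = 1" using Q_ge2 degP by (simp add: P_def coeff_eq_0)
  have P0: "P \<noteq> 0" using degP Q_ge2 by auto
  obtain A where A: "size A = Q" "P = Polynomial.smult (Polynomial.lead_coeff P) (\<Prod>x\<in>#A. [:-x, 1:])"
    using alg_closed_imp_factorization[OF P0] degP by auto
  have PA: "P = (\<Prod>x\<in>#A. [:-x, 1:])" using A(2) lcP by simp
  have Kset_eq: "Kset Q = set_mset A"
  proof -
    have "x \<in> Kset Q \<longleftrightarrow> poly P x = 0" for x by (simp add: Kset_def polyP)
    also have "poly P x = 0 \<longleftrightarrow> x \<in># A" for x
      by (subst PA) (auto simp: poly_prod_mset image_iff)
    finally show ?thesis by blast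
  qed
  have dP: "pderiv P = -1"
  proof -
    have "pderiv P = Polynomial.monom (of_nat Q) (Q - 1) - 1" 
      by (simp add: P_def pderiv_add pderiv_monom pderiv_pCons) (metis minus_pCons one_pCons add.inverse_neutral)
    moreover have "(of_nat Q :: 'a alg_closure) = 0" using Qk k ac_of_nat_card[where 'a='a]
      by (simp add: of_nat_power zero_power)
    ultimately show ?thesis by (simp add: one_pCons)
  qed
  have cnt: "count A x \<le> 1" for x
  proof (rule ccontr)
    assume "\<not> count A x \<le> 1"
    then have "count A x \<ge> 2" by simp
    then have "x \<in># A" by (simp add: count_inI)
    then obtain A1 where A1: "A = add_mset x A1" by (metis multi_member_split)
    then have "count A1 x \<ge> 1" using \<open>count A x \<ge> 2\<close> by simp
    then have "x \<in># A1" by (simp add: count_inI)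
    then obtain B where "A1 = add_mset x B" by (metis multi_member_split)
    then have B: "A = add_mset x (add_mset x B)" using A1 by simp
    have "P = [:-x,1:] * ([:-x,1:] * (\<Prod>y\<in>#B. [:-y, 1:]))" by (simp only: PA B prod_mset.add_mset image_mset_add_mset)
    then have "poly (pderiv P) x = 0"
      by (simp only: pderiv_mult poly_add poly_mult) simp
    with dP show False by simp
  qed
  show ?thesis using Kset_eq card_mset_le1[of A, OF cnt] A(1) by simp
qed

end

lemma phi_exists:
  "\<exists>\<phi> :: 'a::{finite,field}^'n::finite \<Rightarrow> 'a alg_closure.
     bij_betw \<phi> UNIV (Kset (CARD('a)^CARD('n))) \<and> (\<forall>v w. \<phi> (v+w) = \<phi> v + \<phi> w) \<and>
     (\<forall>c v. \<phi> (c *s v) = to_ac c * \<phi> v)"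
proof -
  define n where "n = CARD('n)"
  define Q where "Q = CARD('a)^n"
  have Qk: "Q = CARD('a)^n" and n0: "n > 0" by (simp_all add: Q_def n_def)
  define K where "K = (Kset Q :: 'a alg_closure set)"
  define R where "R = range (to_ac :: 'a \<Rightarrow> 'a alg_closure)"
  have cK: "finite K" "card K = Q" using card_K[OF Qk n0] by (simp_all add: K_def)
  have RK: "r * x \<in> K" if "r \<in> R" "x \<in> K" for r x
    using that K_mult[OF Qk n0] K_to_ac[OF Qk n0] by (auto simp: K_def R_def)
  have Rdiff: "x - y \<in> R" if "x \<in> R" "y \<in> R" for x y
    using that unfolding R_def by (auto simp flip: to_ac_diff)
  have Rmult: "x * y \<in> R" if "x \<in> R" "y \<in> R" for x y
    using that unfolding R_def by (auto simp flip: to_ac_mult)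
  have Rinv: "inverse x \<in> R" if "x \<in> R" for x
    using that unfolding R_def by (auto simp flip: to_ac_inverse)
  have R01: "0 \<in> R" "1 \<in> R" unfolding R_def by (metis to_ac_0 rangeI, metis to_ac_1 rangeI)
  obtain k b where kb: "bij_betw (comb b k) (Cset R k) K"
    using basis_ex[of R K, OF _ cK(1) R01 Rdiff Rmult Rinv K_0[OF Qk n0, folded K_def]
        K_add[OF Qk n0, folded K_def] RK] unfolding R_def by auto
  have cR: "card R = CARD('a)" unfolding R_def by (simp add: card_image inj_to_ac)
  have "CARD('a) ^ k = CARD('a) ^ n"
    using bij_betw_same_card[OF kb] card_Cset[of R k] cR cK Qk unfolding R_def by simp
  then have kn: "k = n" using ff_card_ge2[where 'a='a] by (simp add: power_inject_exp)
  obtain e where e: "bij_betw e {..<n} (UNIV :: 'n set)"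
    using ex_bij_betw_nat_finite[of "UNIV :: 'n set"] by (auto simp: n_def atLeast0LessThan)
  define cf where "cf v = (\<lambda>i. if i < n then to_ac (v $ e i) else 0)" for v :: "'a^'n"
  define \<phi> where "\<phi> v = comb b n (cf v)" for v
  have cfC: "cf v \<in> Cset R n" for v by (auto simp: cf_def Cset_def R_def)
  have inj: "inj \<phi>"
  proof (rule injI)
    fix v w assume "\<phi> v = \<phi> w"
    then have "cf v = cf w" using kb cfC unfolding \<phi>_def kn bij_betw_def inj_on_def by blast
    have ve: "v $ e i = w $ e i" if "i < n" for i
    proof -
      have "cf v i = cf w i" by (simp add: \<open>cf v = cf w\<close>)
      then show ?thesis using that unfolding cf_def by simp
    qed
    show "v = w"
      unfolding vec_eq_iff
    proof
      fix j :: 'n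
      have "j \<in> e ` {..<n}" using bij_betw_imp_surj_on[OF e] by simp
      then obtain i where "i < n" "j = e i" by auto
      then show "v $ j = w $ j" using ve by simp
    qed
  qed
  have sub: "range \<phi> \<subseteq> K" using kb cfC unfolding \<phi>_def kn bij_betw_def by blast
  have "card (range \<phi>) = card K" using inj cK Qk by (simp add: card_image n_def)
  then have "range \<phi> = K" using card_subset_eq[OF cK(1) sub] by simp
  then have bij: "bij_betw \<phi> UNIV K" using inj by (simp add: bij_betw_def)
  have add: "\<phi> (v + w) = \<phi> v + \<phi> w" for v w
  proof -
    have "cf (v + w) i = cf v i + cf w i" for i by (simp add: cf_def)
    then show ?thesis by (simp add: \<phi>_def comb_def distrib_right sum.distrib)
  qed
  have sc: "\<phi> (c *s v) = to_ac c * \<phi> v" for c v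
  proof -
    have "cf (c *s v) i = to_ac c * cf v i" for i by (simp add: cf_def)
    then show ?thesis by (simp add: \<phi>_def comb_def sum_distrib_left mult.assoc)
  qed
  show ?thesis using bij add sc unfolding K_def Q_def n_def by blast
qed

definition dotf :: "'a::field^'n::finite \<Rightarrow> 'a^'n \<Rightarrow> 'a" where
  "dotf w v = (\<Sum>i\<in>UNIV. v$i * w$i)"

definition kerf :: "'a::field^'n::finite \<Rightarrow> ('a^'n) set" where
  "kerf w = {v. dotf w v = 0}"

definition line :: "'a::field^'n::finite \<Rightarrow> ('a^'n) set" where
  "line v = range (\<lambda>c. c *s v)"

lemma dotf_add: "dotf w (v + u) = dotf w v + dotf w u"
  by (simp add: dotf_def distrib_right sum.distrib)
lemma dotf_scale: "dotf w (c *s v) = c * dotf w v"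
  by (simp add: dotf_def sum_distrib_left mult.assoc)
lemma dotf_scale_left: "dotf (c *s w) v = c * dotf w v"
  by (simp add: dotf_def sum_distrib_left mult_ac)
lemma dotf_diff: "dotf w (v - u) = dotf w v - dotf w u"
  by (simp add: dotf_def left_diff_distrib sum_subtractf)
lemma dotf_zero[simp]: "dotf w 0 = 0"
  by (simp add: dotf_def)
lemma dotf_axis: "dotf w (axis j c) = c * w$j"
proof -
  have "dotf w (axis j c) = (\<Sum>i\<in>{j}. axis j c $ i * w$i)"
    unfolding dotf_def by (rule sum.mono_neutral_right) (auto simp: axis_def)
  then show ?thesis by simp
qed

lemma dim_UNIV_vec: "vec.dim (UNIV :: ('a::field^'n::finite) set) = CARD('n)"
  by (simp add: card_cart_basis)

lemma dim_full_iff: "vec.dim (S :: ('a::field^'n::finite) set) = CARD('n) \<longleftrightarrow> vec.span S = UNIV"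
  using vec.dim_eq_full[of S] by (simp add: vec.dimension_def card_cart_basis)

lemma kerf_subspace: "vec.subspace (kerf w)"
  unfolding vec.subspace_def kerf_def by (simp add: dotf_add dotf_scale)

lemma exists_dotf_1:
  assumes "w \<noteq> (0::'a::field^'n::finite)"
  obtains v0 where "dotf w v0 = 1"
proof -
  obtain j where "w $ j \<noteq> 0" using assms by (metis vec_eq_iff zero_index)
  then have "dotf w (axis j (inverse (w$j))) = 1" by (simp add: dotf_axis)
  then show ?thesis using that by blast
qed

lemma kerf_dim:
  assumes "w \<noteq> (0::'a::field^'n::finite)"
  shows "vec.dim (kerf w) = CARD('n) - 1"
proof -
  obtain v0 where v0: "dotf w v0 = 1" using exists_dotf_1[OF assms] by blast
  have spanK: "vec.span (kerf w) = kerf w" using kerf_subspace by (simp add: vec.span_eq_iff)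
  have "vec.span (insert v0 (kerf w)) = UNIV"
  proof -
    have "v - dotf w v *s v0 \<in> kerf w" for v by (simp add: kerf_def dotf_diff dotf_scale v0)
    then show ?thesis by (auto simp: vec.span_insert spanK)
  qed
  then have "vec.dim (insert v0 (kerf w)) = CARD('n)" by (simp add: dim_full_iff)
  moreover have "v0 \<notin> vec.span (kerf w)" unfolding spanK using v0 by (simp add: kerf_def)
  ultimately show ?thesis by (simp add: vec.dim_insert)
qed

lemma line_subspace: "vec.subspace (line v)"
  using vec.subspace_span[of "{v}"] by (simp add: line_def vec.span_singleton)

lemma line_dim: assumes "v \<noteq> 0" shows "vec.dim (line (v::'a::field^'n::finite)) = 1"
proof -
  have "vec.dim (line v) = vec.dim {v}" by (simp add: line_def flip: vec.span_singleton)
  also have "\<dots> = 1" using assms by (simp add: vec.dim_insert)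
  finally show ?thesis .
qed

lemma dim1_line:
  assumes "vec.subspace U" "vec.dim (U :: ('a::field^'n::finite) set) = 1"
  obtains v where "v \<noteq> 0" "U = line v"
proof -
  obtain B where B: "B \<subseteq> U" "vec.independent B" "U \<subseteq> vec.span B" "card B = 1"
    using vec.basis_exists[of U] assms by metis
  then obtain v where v: "B = {v}" by (auto simp: card_Suc_eq)
  have "v \<noteq> 0" using B(2) v vec.dependent_zero by blast
  moreover have "U = vec.span {v}" using B v assms(1) vec.span_subspace by blast
  ultimately show ?thesis using that by (simp add: line_def vec.span_singleton)
qed

lemma dimn1_kerf:
  assumes H: "vec.subspace H" "vec.dim (H :: ('a::field^'n::finite) set) = CARD('n) - 1"
  obtains w where "w \<noteq> 0" "H = kerf w"
proof -
  have spanH: "vec.span H = H" using H by (simp add: vec.span_eq_iff)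
  have c0: "CARD('n) > 0" by simp
  have "vec.dim H \<noteq> CARD('n)" using H(2) c0 by linarith
  then have "vec.span H \<noteq> UNIV" using dim_full_iff[of H] by blast
  then obtain e where e: "e \<notin> H" using spanH by auto
  have "vec.dim (insert e H) = CARD('n)" using e H c0 unfolding vec.dim_insert spanH by simp
  then have spanI: "vec.span (insert e H) = UNIV" by (simp add: dim_full_iff)
  have ex: "\<exists>c. v - c *s e \<in> H" for v
    using spanI by (auto simp: vec.span_insert spanH)
  have uniq: "c = c'" if "v - c *s e \<in> H" "v - c' *s e \<in> H" for v c c'
  proof (rule ccontr)
    assume "c \<noteq> c'"
    have "(v - c' *s e) - (v - c *s e) \<in> H" using that H(1) vec.subspace_diff by blast
    moreover have "(v - c' *s e) - (v - c *s e) = (c - c') *s e" by (simp add: vec_eq_iff algebra_simps)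
    ultimately have "(c - c') *s e \<in> H" by simp
    then have "inverse (c - c') *s ((c - c') *s e) \<in> H" using H(1) vec.subspace_scale by blast
    moreover have "inverse (c - c') *s ((c - c') *s e) = e" 
    proof -
      have "c - c' \<noteq> 0" using \<open>c \<noteq> c'\<close> by simp
      then have "inverse (c - c') * (c - c') = 1" by simp
      then show ?thesis by (simp only: vector_smult_assoc vector_smult_lid)
    qed
    ultimately have "e \<in> H" by simp
    with e show False by blast
  qed
  define g where "g v = (THE c. v - c *s e \<in> H)" for v
  have g: "v - g v *s e \<in> H" for v
    unfolding g_def by (rule theI') (use ex uniq in blast)
  have g_eq: "g v = c" if "v - c *s e \<in> H" for v c
    using uniq[OF g that] .
  have g_add: "g (v + u) = g v + g u" for v u
  proof (rule g_eq)
    have "(v - g v *s e) + (u - g u *s e) \<in> H" using g H(1) vec.subspace_add by blast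
    moreover have "(v - g v *s e) + (u - g u *s e) = v + u - (g v + g u) *s e" by (simp add: vec_eq_iff algebra_simps)
    ultimately show "v + u - (g v + g u) *s e \<in> H" by simp
  qed
  have g_sc: "g (a *s v) = a * g v" for a v
  proof (rule g_eq)
    have "a *s (v - g v *s e) \<in> H" using g H(1) vec.subspace_scale by blast
    moreover have "a *s (v - g v *s e) = a *s v - (a * g v) *s e" by (simp add: vec_eq_iff algebra_simps)
    ultimately show "a *s v - (a * g v) *s e \<in> H" by simp
  qed
  have g0: "g 0 = 0" using g_sc[of 0 0] by simp
  have g_sum: "g (\<Sum>i\<in>S. f i) = (\<Sum>i\<in>S. g (f i))" if "finite S" for S f
    using that by (induction S rule: finite_induct) (simp_all add: g0 g_add)
  define w where "w = (\<chi> i. g (axis i 1))"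
  have dw: "dotf w v = g v" for v
  proof -
    have "g v = g (\<Sum>i\<in>UNIV. (v$i) *s axis i 1)" by (simp add: basis_expansion)
    also have "\<dots> = (\<Sum>i\<in>UNIV. v$i * g (axis i 1))" by (simp add: g_sum g_sc)
    finally show ?thesis by (simp add: dotf_def w_def)
  qed
  have "g e = 1" by (rule g_eq) (simp add: H(1) vec.subspace_0)
  then have "w \<noteq> 0" using dw[of e] by (auto simp: dotf_def)
  moreover have "H = kerf w"
  proof (rule Set.set_eqI)
    fix v
    have "v \<in> H \<longleftrightarrow> g v = 0"
    proof
      assume "v \<in> H" then show "g v = 0" by (intro g_eq) simp
    next
      assume "g v = 0" then show "v \<in> H" using g[of v] by simp
    qed
    then show "v \<in> H \<longleftrightarrow> v \<in> kerf w" by (simp add: kerf_def dw)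
  qed
  ultimately show ?thesis using that by blast
qed

lemma kerf_sub_imp_scale:
  assumes "w \<noteq> (0::'a::field^'n::finite)" "kerf w \<subseteq> kerf w'"
  shows "\<exists>c. w' = c *s w"
proof -
  obtain v0 where v0: "dotf w v0 = 1" using exists_dotf_1[OF assms(1)] by blast
  define c where "c = dotf w' v0"
  have "dotf w' v = c * dotf w v" for v
  proof -
    have "v - dotf w v *s v0 \<in> kerf w" by (simp add: kerf_def dotf_diff dotf_scale v0)
    then have "dotf w' (v - dotf w v *s v0) = 0" using assms(2) by (auto simp: kerf_def)
    then show ?thesis by (simp add: dotf_diff dotf_scale c_def mult.commute)
  qed
  then have "w' $ j = c * w $ j" for j using dotf_axis[of w' j 1] dotf_axis[of w j 1] by simp
  then show ?thesis by (auto simp: vec_eq_iff)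
qed

lemma lin_functional:
  fixes f :: "'a::field^'n::finite \<Rightarrow> 'a"
  assumes add: "\<And>v u. f (v + u) = f v + f u" and sc: "\<And>c v. f (c *s v) = c * f v"
  shows "f v = dotf (\<chi> i. f (axis i 1)) v"
proof -
  have f0: "f 0 = 0" using sc[of 0 0] by simp
  have fs: "f (\<Sum>i\<in>S. g i) = (\<Sum>i\<in>S. f (g i))" if "finite S" for S and g :: "'n \<Rightarrow> 'a^'n"
    using that by (induction S rule: finite_induct) (simp_all add: f0 add)
  have "f v = f (\<Sum>i\<in>UNIV. (v$i) *s axis i 1)" by (simp add: basis_expansion)
  also have "\<dots> = (\<Sum>i\<in>UNIV. v$i * f (axis i 1))" by (simp add: fs sc)
  finally show ?thesis by (simp add: dotf_def)
qed

lemma kerf_scale: "c \<noteq> 0 \<Longrightarrow> kerf (c *s w) = kerf w"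
  by (auto simp: kerf_def dotf_scale_left)

lemma line_scale: assumes "c \<noteq> 0" shows "line (c *s u) = line u"
proof -
  have "line (c *s u) \<subseteq> line u" by (auto simp: line_def vector_smult_assoc)
  moreover have "u = inverse c *s (c *s u)" using assms by (simp add: vector_smult_assoc)
  then have "line u \<subseteq> line (c *s u)" unfolding line_def
    by (metis (no_types, lifting) image_subsetI rangeI vector_smult_assoc)
  ultimately show ?thesis by blast
qed

lemma line_eq:
  assumes "u' \<noteq> 0" "line u = line u'"
  shows "\<exists>c. c \<noteq> 0 \<and> u' = c *s u"
proof -
  have "u' \<in> line u'" unfolding line_def by (metis rangeI vector_smult_lid)
  then obtain c where "u' = c *s u" using assms(2) unfolding line_def by auto
  moreover then have "c \<noteq> 0" using assms(1) by auto
  ultimately show ?thesis by blast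
qed

lemma mem_line: "u \<in> line u"
  unfolding line_def by (metis rangeI vector_smult_lid)

lemma line_sub: assumes "vec.subspace U" shows "line u \<subseteq> U \<longleftrightarrow> u \<in> U"
  using assms mem_line[of u] by (auto simp: line_def vec.subspace_scale)

lemma two_kernels:
  assumes n3: "CARD('n::finite) \<ge> 3" and w: "w \<noteq> (0::'a::field^'n)" and w': "w' \<noteq> 0"
  shows "\<exists>v. v \<noteq> 0 \<and> dotf w v = 0 \<and> dotf w' v = 0"
proof -
  have dK: "vec.dim (kerf w) \<ge> 2" using kerf_dim[OF w] n3 by simp
  have "\<not> kerf w \<subseteq> {0}"
  proof
    assume "kerf w \<subseteq> {0}"
    then have "vec.dim (kerf w) \<le> vec.dim {0::'a^'n}" by (rule vec.dim_subset)
    also have "vec.dim {0::'a^'n} = 0" by (simp add: vec.dim_insert vec.span_zero)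
    finally have "vec.dim (kerf w) = 0" by simp
    then show False using dK by linarith
  qed
  then obtain b1 where b1: "b1 \<in> kerf w" "b1 \<noteq> 0" by auto
  have "\<not> kerf w \<subseteq> line b1"
  proof
    assume "kerf w \<subseteq> line b1"
    then have "vec.dim (kerf w) \<le> vec.dim (line b1)" by (rule vec.dim_subset)
    then show False using line_dim[OF b1(2)] dK by simp
  qed
  then obtain b2 where b2: "b2 \<in> kerf w" "b2 \<notin> line b1" by auto
  show ?thesis
  proof (cases "dotf w' b1 = 0")
    case True then show ?thesis using b1 by (auto simp: kerf_def)
  next
    case False
    define v where "v = dotf w' b2 *s b1 - dotf w' b1 *s b2"
    have "dotf w v = 0" using b1 b2 by (simp add: v_def kerf_def dotf_diff dotf_scale)
    moreover have "dotf w' v = 0" by (simp add: v_def dotf_diff dotf_scale mult.commute)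
    moreover have "v \<noteq> 0"
    proof
      assume "v = 0"
      then have "dotf w' b1 *s b2 = dotf w' b2 *s b1" by (simp add: v_def)
      then have "inverse (dotf w' b1) *s (dotf w' b1 *s b2) = inverse (dotf w' b1) *s (dotf w' b2 *s b1)"
        by simp
      then have "b2 = (inverse (dotf w' b1) * dotf w' b2) *s b1" using False
        by (simp add: vector_smult_assoc)
      then have "b2 \<in> line b1" by (simp add: line_def)
      with b2 show False by blast
    qed
    ultimately show ?thesis by blast
  qed
qed

lemma quotient_cayley:
  fixes C :: "'g set" and mul :: "'g \<Rightarrow> 'g \<Rightarrow> 'g" and one :: 'g and iv :: "'g \<Rightarrow> 'g"
    and \<pi> :: "'g \<Rightarrow> 'v" and V :: "'v set" and S :: "'g set" and E :: "'v \<Rightarrow> 'v \<Rightarrow> bool"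
  assumes closed: "\<And>x y. x\<in>C \<Longrightarrow> y\<in>C \<Longrightarrow> mul x y \<in> C"
    and one_C: "one \<in> C" and iv_C: "\<And>x. x\<in>C \<Longrightarrow> iv x \<in> C"
    and assoc: "\<And>x y z. x\<in>C \<Longrightarrow> y\<in>C \<Longrightarrow> z\<in>C \<Longrightarrow> mul (mul x y) z = mul x (mul y z)"
    and lone: "\<And>x. x\<in>C \<Longrightarrow> mul one x = x"
    and linv: "\<And>x. x\<in>C \<Longrightarrow> mul (iv x) x = one"
    and fin: "finite V"
    and piC: "\<pi> ` C = V"
    and compat: "\<And>x x' y y'. x\<in>C \<Longrightarrow> x'\<in>C \<Longrightarrow> y\<in>C \<Longrightarrow> y'\<in>C \<Longrightarrow> \<pi> x = \<pi> x' \<Longrightarrow> \<pi> y = \<pi> y'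
        \<Longrightarrow> \<pi> (mul x y) = \<pi> (mul x' y')"
    and SC: "S \<subseteq> C" and one_S: "\<pi> one \<notin> \<pi> ` S"
    and S_inv: "\<And>s. s\<in>S \<Longrightarrow> \<pi> (iv s) \<in> \<pi> ` S"
    and gen: "\<And>x. x\<in>C \<Longrightarrow> \<exists>ss. set ss \<subseteq> S \<and> \<pi> x = \<pi> (foldr mul ss one)"
    and adj: "\<And>x y. x\<in>C \<Longrightarrow> y\<in>C \<Longrightarrow> E (\<pi> x) (\<pi> y) \<longleftrightarrow> \<pi> (mul (iv x) y) \<in> \<pi> ` S"
  shows "is_cayley_graph V E"
proof -
  define \<rho> where "\<rho> u = (SOME x. x \<in> C \<and> \<pi> x = u)" for u
  have \<rho>: "\<rho> u \<in> C \<and> \<pi> (\<rho> u) = u" if "u \<in> V" for u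
    unfolding \<rho>_def by (rule someI_ex) (use that piC in blast)
  define G :: "'v monoid" where "G = \<lparr>carrier = V, mult = (\<lambda>u v. \<pi> (mul (\<rho> u) (\<rho> v))), one = \<pi> one\<rparr>"
  have [simp]: "carrier G = V" "\<one>\<^bsub>G\<^esub> = \<pi> one" by (simp_all add: G_def)
  have piV: "\<pi> x \<in> V" if "x \<in> C" for x using that piC by blast
  have hom: "\<pi> x \<otimes>\<^bsub>G\<^esub> \<pi> y = \<pi> (mul x y)" if "x \<in> C" "y \<in> C" for x y
  proof -
    have "\<pi> x \<otimes>\<^bsub>G\<^esub> \<pi> y = \<pi> (mul (\<rho> (\<pi> x)) (\<rho> (\<pi> y)))" by (simp add: G_def)
    also have "\<dots> = \<pi> (mul x y)" using \<rho>[OF piV[OF that(1)]] \<rho>[OF piV[OF that(2)]] that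
      by (intro compat) auto
    finally show ?thesis .
  qed
  have elim: "\<exists>x\<in>C. u = \<pi> x" if "u \<in> V" for u using that piC by blast
  have grp: "group G"
  proof (rule groupI)
    fix u v assume "u \<in> carrier G" "v \<in> carrier G"
    then show "u \<otimes>\<^bsub>G\<^esub> v \<in> carrier G" using \<rho> closed piV by (simp add: G_def)
  next
    show "\<one>\<^bsub>G\<^esub> \<in> carrier G" using one_C piV by simp
  next
    fix u v w assume "u \<in> carrier G" "v \<in> carrier G" "w \<in> carrier G"
    then have "u \<in> V" "v \<in> V" "w \<in> V" by simp_all
    then obtain x y z where xyz: "x\<in>C" "y\<in>C" "z\<in>C" "u = \<pi> x" "v = \<pi> y" "w = \<pi> z"
      using elim by meson
    then show "u \<otimes>\<^bsub>G\<^esub> v \<otimes>\<^bsub>G\<^esub> w = u \<otimes>\<^bsub>G\<^esub> (v \<otimes>\<^bsub>G\<^esub> w)"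
      by (simp add: hom closed assoc)
  next
    fix u assume "u \<in> carrier G"
    then have "u \<in> V" by simp
    then obtain x where "x\<in>C" "u = \<pi> x" using elim by blast
    then show "\<one>\<^bsub>G\<^esub> \<otimes>\<^bsub>G\<^esub> u = u" using one_C by (simp add: hom lone)
  next
    fix u assume "u \<in> carrier G"
    then have "u \<in> V" by simp
    then obtain x where x: "x\<in>C" "u = \<pi> x" using elim by blast
    then have "\<pi> (iv x) \<otimes>\<^bsub>G\<^esub> u = \<one>\<^bsub>G\<^esub>" using iv_C by (simp add: hom linv)
    moreover have "\<pi> (iv x) \<in> carrier G" using iv_C x piV by simp
    ultimately show "\<exists>y\<in>carrier G. y \<otimes>\<^bsub>G\<^esub> u = \<one>\<^bsub>G\<^esub>" by blast
  qed
  have inv: "inv\<^bsub>G\<^esub> (\<pi> x) = \<pi> (iv x)" if "x \<in> C" for x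
    using group.inv_equality[OF grp] that iv_C piV by (simp add: hom linv)
  have foldC: "foldr mul ss one \<in> C" if "set ss \<subseteq> S" for ss
    using that SC by (induction ss) (auto simp: one_C closed)
  have foldG: "\<pi> (foldr mul ss one) \<in> generate G (\<pi> ` S)" if "set ss \<subseteq> S" for ss
    using that
  proof (induction ss)
    case Nil then show ?case using generate.one[of G "\<pi> ` S"] by simp
  next
    case (Cons s ss)
    have g1: "\<pi> s \<in> generate G (\<pi> ` S)" by (rule generate.incl) (use Cons.prems in auto)
    have g2: "\<pi> (foldr mul ss one) \<in> generate G (\<pi> ` S)" using Cons by auto
    have "\<pi> s \<otimes>\<^bsub>G\<^esub> \<pi> (foldr mul ss one) \<in> generate G (\<pi> ` S)"
      by (rule generate.eng[OF g1 g2])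
    moreover have "s \<in> C" using Cons.prems SC by auto
    ultimately show ?case using foldC[of ss] Cons.prems by (simp add: hom)
  qed
  show ?thesis unfolding is_cayley_graph_def
  proof (intro exI conjI)
    show "group G" by (rule grp)
    show "finite (carrier G)" using fin by simp
    show "\<pi> ` S \<subseteq> carrier G" using SC piV by auto
    show "\<one>\<^bsub>G\<^esub> \<notin> \<pi> ` S" using one_S by simp
    show "\<forall>s\<in>\<pi> ` S. inv\<^bsub>G\<^esub> s \<in> \<pi> ` S" using S_inv inv SC by auto
    show "generate G (\<pi> ` S) = carrier G"
    proof
      show "generate G (\<pi> ` S) \<subseteq> carrier G"
      proof
        fix u assume "u \<in> generate G (\<pi> ` S)"
        moreover have "\<pi> ` S \<subseteq> carrier G" using SC piV by auto
        ultimately show "u \<in> carrier G" using group.generate_in_carrier[OF grp] by blast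
      qed
    next
      show "carrier G \<subseteq> generate G (\<pi> ` S)"
      proof
        fix u assume "u \<in> carrier G"
        then have "u \<in> V" by simp
    then obtain x where x: "x\<in>C" "u = \<pi> x" using elim by blast
        then obtain ss where "set ss \<subseteq> S" "\<pi> x = \<pi> (foldr mul ss one)" using gen by blast
        then show "u \<in> generate G (\<pi> ` S)" using foldG x by simp
      qed
    qed
    show "bij_betw id (carrier G) V" by simp
    show "\<forall>g\<in>carrier G. \<forall>h\<in>carrier G. E (id g) (id h) \<longleftrightarrow> inv\<^bsub>G\<^esub> g \<otimes>\<^bsub>G\<^esub> h \<in> \<pi> ` S"
    proof (intro ballI)
      fix g h assume "g \<in> carrier G" "h \<in> carrier G"
      then have "g \<in> V" "h \<in> V" by simp_all
      then obtain x y where xy: "x\<in>C" "y\<in>C" "g = \<pi> x" "h = \<pi> y" using elim by meson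
      then show "E (id g) (id h) \<longleftrightarrow> inv\<^bsub>G\<^esub> g \<otimes>\<^bsub>G\<^esub> h \<in> \<pi> ` S"
        using adj[OF xy(1,2)] by (simp add: inv hom iv_C)
    qed
  qed
qed

theorem main_thm:
  assumes n3: "CARD('n::finite) \<ge> 3"
  shows "is_cayley_graph (incidence_vertices :: ('a::{finite,field} ^ 'n) set set) incidence_adj"
proof -
  define n where "n = CARD('n)"
  define Q where "Q = CARD('a)^n"
  define K where "K = (Kset Q :: 'a alg_closure set)"
  have Qk: "Q = CARD('a)^n" and n0: "n > 0" by (simp_all add: Q_def n_def)
  obtain \<phi> :: "'a^'n \<Rightarrow> 'a alg_closure" where \<phi>bij: "bij_betw \<phi> UNIV K"
      and \<phi>add: "\<And>v w. \<phi> (v+w) = \<phi> v + \<phi> w" and \<phi>sc: "\<And>c v. \<phi> (c *s v) = to_ac c * \<phi> v"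
    using phi_exists[where 'a='a and 'n='n] unfolding K_def Q_def n_def by blast
  have K0: "0 \<in> K" and K1: "1 \<in> K" using K_0[OF Qk n0] K_1[OF Qk n0] by (simp_all add: K_def)
  have Kadd: "x + y \<in> K" if "x \<in> K" "y \<in> K" for x y using that K_add[OF Qk n0] by (simp add: K_def)
  have Kdiff: "x - y \<in> K" if "x \<in> K" "y \<in> K" for x y using that K_diff[OF Qk n0] by (simp add: K_def)
  have Kmult: "x * y \<in> K" if "x \<in> K" "y \<in> K" for x y using that K_mult[OF Qk n0] by (simp add: K_def)
  have Kinv: "inverse x \<in> K" if "x \<in> K" for x using that K_inverse[OF Qk n0] by (simp add: K_def)
  have Kdiv: "x / y \<in> K" if "x \<in> K" "y \<in> K" for x y using that K_divide[OF Qk n0] by (simp add: K_def)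
  have Kac: "to_ac c \<in> K" for c using K_to_ac[OF Qk n0] by (simp add: K_def)
  have cardK: "finite K" "card K = Q" using card_K[OF Qk n0] by (simp_all add: K_def)
  define \<psi> where "\<psi> = inv_into UNIV \<phi>"
  have injphi: "inj \<phi>" using \<phi>bij by (simp add: bij_betw_def)
  have \<phi>K: "\<phi> v \<in> K" for v using \<phi>bij by (auto simp: bij_betw_def)
  have \<phi>\<psi>: "\<phi> (\<psi> z) = z" if "z \<in> K" for z
    using that \<phi>bij unfolding \<psi>_def by (simp add: bij_betw_inv_into_right)
  have \<psi>\<phi>: "\<psi> (\<phi> v) = v" for v using injphi unfolding \<psi>_def by simp
  have \<phi>0: "\<phi> 0 = 0" using \<phi>sc[of 0 0] by simp
  have \<phi>eq0: "\<phi> v = 0 \<longleftrightarrow> v = 0" for v using injphi \<phi>0 by (metis injD)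
  have \<psi>add: "\<psi> (x + y) = \<psi> x + \<psi> y" if "x \<in> K" "y \<in> K" for x y
    by (metis \<phi>add \<phi>\<psi> \<psi>\<phi> that)
  have \<psi>sc: "\<psi> (to_ac c * x) = c *s \<psi> x" if "x \<in> K" for c x
    by (metis \<phi>sc \<phi>\<psi> \<psi>\<phi> that)
  have \<psi>0: "\<psi> 0 = 0" using \<psi>\<phi>[of 0] \<phi>0 by simp
  have \<psi>eq0: "\<psi> x = 0 \<longleftrightarrow> x = 0" if "x \<in> K" for x using that \<phi>\<psi> \<psi>0 by (metis \<phi>0)
  define i0 where "i0 = (undefined :: 'n)"
  define T where "T z = \<psi> z $ i0" for z
  have Tadd: "T (x + y) = T x + T y" if "x \<in> K" "y \<in> K" for x y using that by (simp add: T_def \<psi>add)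
  have Tsc: "T (to_ac c * x) = c * T x" if "x \<in> K" for c x using that by (simp add: T_def \<psi>sc)
  define \<Psi> where "\<Psi> y = (\<chi> i. T (y * \<phi> (axis i 1)))" for y
  have T\<Psi>: "T (y * \<phi> v) = dotf (\<Psi> y) v" if "y \<in> K" for y v
  proof -
    have "T (y * \<phi> v) = dotf (\<chi> i. T (y * \<phi> (axis i 1))) v"
    proof (rule lin_functional[where f = "\<lambda>v. T (y * \<phi> v)"])
      show "T (y * \<phi> (v + u)) = T (y * \<phi> v) + T (y * \<phi> u)" for v u
        using that \<phi>K Kmult by (simp add: \<phi>add distrib_left Tadd)
      show "T (y * \<phi> (c *s v)) = c * T (y * \<phi> v)" for c v
      proof -
        have e: "y * \<phi> (c *s v) = to_ac c * (y * \<phi> v)" by (simp add: \<phi>sc mult.left_commute)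
        show ?thesis unfolding e by (rule Tsc) (use that \<phi>K Kmult in blast)
      qed
    qed
    then show ?thesis by (simp add: \<Psi>_def)
  qed
  have \<Psi>sc: "\<Psi> (to_ac c * y) = c *s \<Psi> y" if "y \<in> K" for c y
  proof -
    have "T (to_ac c * y * \<phi> (axis i 1)) = c * T (y * \<phi> (axis i 1))" for i
      using Tsc[of "y * \<phi> (axis i 1)" c] that \<phi>K Kmult by (simp add: mult.assoc)
    then show ?thesis by (simp add: \<Psi>_def vec_eq_iff)
  qed
  have \<Psi>add: "\<Psi> (y + y') = \<Psi> y + \<Psi> y'" if "y \<in> K" "y' \<in> K" for y y'
  proof -
    have "T ((y + y') * \<phi> (axis i 1)) = T (y * \<phi> (axis i 1)) + T (y' * \<phi> (axis i 1))" for i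
      using Tadd[of "y * \<phi> (axis i 1)" "y' * \<phi> (axis i 1)"] that \<phi>K Kmult by (simp add: distrib_right)
    then show ?thesis by (simp add: \<Psi>_def vec_eq_iff)
  qed
  have \<Psi>0: "\<Psi> 0 = 0" by (simp add: \<Psi>_def T_def \<psi>0 vec_eq_iff)
  have \<Psi>diff: "\<Psi> (y - y') = \<Psi> y - \<Psi> y'" if "y \<in> K" "y' \<in> K" for y y'
  proof -
    have "\<Psi> y = \<Psi> ((y - y') + y')" by simp
    also have "\<dots> = \<Psi> (y - y') + \<Psi> y'" using that Kdiff by (intro \<Psi>add) auto
    finally show ?thesis by simp
  qed
  have dotf0: "dotf 0 v = 0" for v :: "'a^'n" by (simp add: dotf_def)
  have \<Psi>eq0: "y = 0" if "y \<in> K" "\<Psi> y = 0" for y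
  proof (rule ccontr)
    assume y0: "y \<noteq> 0"
    define z0 where "z0 = \<phi> (axis i0 1)"
    have z0K: "z0 / y \<in> K" using Kdiv \<phi>K that(1) by (simp add: z0_def)
    define v where "v = \<psi> (z0 / y)"
    have "y * \<phi> v = z0" using z0K y0 by (simp add: v_def \<phi>\<psi>)
    then have "T (y * \<phi> v) = 1" by (simp add: T_def z0_def \<psi>\<phi>)
    moreover have "T (y * \<phi> v) = 0" using T\<Psi>[OF that(1)] that(2) dotf0 by simp
    ultimately show False by simp
  qed
  have \<Psi>inj: "inj_on \<Psi> K"
  proof (rule inj_onI)
    fix y y' assume "y \<in> K" "y' \<in> K" "\<Psi> y = \<Psi> y'"
    then have "\<Psi> (y - y') = 0" by (simp add: \<Psi>diff)
    then have "y - y' = 0" using \<Psi>eq0 Kdiff \<open>y \<in> K\<close> \<open>y' \<in> K\<close> by blast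
    then show "y = y'" by simp
  qed
  have \<Psi>surj: "\<Psi> ` K = UNIV"
  proof -
    have "card (\<Psi> ` K) = card (UNIV :: ('a^'n) set)"
      using card_image[OF \<Psi>inj] cardK by (simp add: Q_def n_def)
    then show ?thesis using card_subset_eq[of "UNIV::('a^'n) set" "\<Psi> ` K"] by simp
  qed
  define C where "C = {a :: 'a alg_closure \<times> bool. fst a \<in> K \<and> fst a \<noteq> 0}"
  define mul where "mul a b = (if snd a then fst a / fst b else fst a * fst b, snd a \<noteq> snd b)"
    for a b :: "'a alg_closure \<times> bool"
  define one where "one = (1 :: 'a alg_closure, False)"
  define iv where "iv a = (if snd a then fst a else inverse (fst a), snd a)" for a :: "'a alg_closure \<times> bool"
  define \<pi> where "\<pi> a = (if snd a then kerf (\<Psi> (fst a)) else line (\<psi> (inverse (fst a))))"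
    for a :: "'a alg_closure \<times> bool"
  define S where "S = {a. snd a \<and> fst a \<in> K \<and> fst a \<noteq> 0 \<and> T (fst a) = 0}"
  have n1: "n - 1 \<noteq> 1" using n3 by (simp add: n_def)
  have pt: "vec.subspace (\<pi> a) \<and> vec.dim (\<pi> a) = 1" if "a \<in> C" "\<not> snd a" for a
  proof -
    have "\<psi> (inverse (fst a)) \<noteq> 0" using that Kinv \<psi>eq0 by (simp add: C_def)
    then show ?thesis using that by (simp add: \<pi>_def line_subspace line_dim)
  qed
  have hy: "vec.subspace (\<pi> a) \<and> vec.dim (\<pi> a) = n - 1" if "a \<in> C" "snd a" for a
  proof -
    have "\<Psi> (fst a) \<noteq> 0" using that \<Psi>eq0 by (auto simp: C_def)
    then show ?thesis using that by (simp add: \<pi>_def n_def kerf_subspace kerf_dim)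
  qed
  have char1: "snd a = snd a' \<and> (\<exists>c. c \<noteq> 0 \<and> fst a' = to_ac c * fst a)"
    if "a \<in> C" "a' \<in> C" "\<pi> a = \<pi> a'" for a a'
  proof -
    have sa: "snd a = snd a'"
    proof (rule ccontr)
      assume "snd a \<noteq> snd a'"
      have d: "vec.dim (\<pi> a) = vec.dim (\<pi> a')" using that(3) by simp
      show False
      proof (cases "snd a")
        case True
        then have "\<not> snd a'" using \<open>snd a \<noteq> snd a'\<close> by simp
        then show False using hy[OF that(1) True] pt[OF that(2)] d n1 by simp
      next
        case False
        then have "snd a'" using \<open>snd a \<noteq> snd a'\<close> by simp
        then show False using pt[OF that(1) False] hy[OF that(2)] d n1 by simp
      qed
    qed
    have xK: "fst a \<in> K" "fst a \<noteq> 0" "fst a' \<in> K" "fst a' \<noteq> 0" using that by (auto simp: C_def)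
    show ?thesis
    proof (cases "snd a")
      case False
      then have "line (\<psi> (inverse (fst a))) = line (\<psi> (inverse (fst a')))"
        using that(3) sa by (simp add: \<pi>_def)
      moreover have "\<psi> (inverse (fst a')) \<noteq> 0" using xK Kinv \<psi>eq0 by simp
      ultimately obtain c where c: "c \<noteq> 0" "\<psi> (inverse (fst a')) = c *s \<psi> (inverse (fst a))"
        using line_eq by blast
      then have "\<phi> (\<psi> (inverse (fst a'))) = to_ac c * \<phi> (\<psi> (inverse (fst a)))" by (simp add: \<phi>sc)
      then have ie: "inverse (fst a') = to_ac c * inverse (fst a)" using xK Kinv by (simp add: \<phi>\<psi>)
      have "fst a' = inverse (inverse (fst a'))" by simp
      also have "\<dots> = inverse (to_ac c * inverse (fst a))" by (simp only: ie)
      also have "\<dots> = to_ac (inverse c) * fst a" by (simp add: inverse_mult_distrib)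
      finally have e: "fst a' = to_ac (inverse c) * fst a" .
      show ?thesis
      proof (intro conjI exI)
        show "snd a = snd a'" by (rule sa)
        show "inverse c \<noteq> 0" using c by simp
        show "fst a' = to_ac (inverse c) * fst a" by (rule e)
      qed
    next
      case True
      then have eqk: "kerf (\<Psi> (fst a)) = kerf (\<Psi> (fst a'))"
        using that(3) sa by (simp add: \<pi>_def)
      have "\<Psi> (fst a) \<noteq> 0" using xK \<Psi>eq0 by blast
      then obtain c where "\<Psi> (fst a') = c *s \<Psi> (fst a)" using kerf_sub_imp_scale eqk by blast
      then have "\<Psi> (fst a') = \<Psi> (to_ac c * fst a)" using \<Psi>sc xK by simp
      then have e: "fst a' = to_ac c * fst a" using \<Psi>inj xK Kmult Kac unfolding inj_on_def by blast
      then have "c \<noteq> 0" using xK by auto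
      then show ?thesis using sa e by blast
    qed
  qed
  have char2: "\<pi> a = \<pi> a'" if "a \<in> C" "snd a = snd a'" "c \<noteq> 0" "fst a' = to_ac c * fst a" for a a' c
  proof -
    have xK: "fst a \<in> K" "fst a \<noteq> 0" using that by (auto simp: C_def)
    show ?thesis
    proof (cases "snd a")
      case False
      have "inverse (fst a') = to_ac (inverse c) * inverse (fst a)" using that by (simp add: to_ac_inverse)
      then have "\<psi> (inverse (fst a')) = inverse c *s \<psi> (inverse (fst a))"
        using \<psi>sc[of "inverse (fst a)" "inverse c"] Kinv xK by simp
      then show ?thesis using False that by (simp add: \<pi>_def line_scale)
    next
      case True
      have "\<Psi> (fst a') = c *s \<Psi> (fst a)" using that \<Psi>sc xK by simp
      then show ?thesis using True that by (simp add: \<pi>_def kerf_scale)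
    qed
  qed
  have CE: "fst a \<in> K \<and> fst a \<noteq> 0" if "a \<in> C" for a using that by (simp add: C_def)
  have closed: "mul a b \<in> C" if "a \<in> C" "b \<in> C" for a b
    using CE[OF that(1)] CE[OF that(2)] Kdiv Kmult by (simp add: mul_def C_def)
  have one_C: "one \<in> C" using K1 by (simp add: one_def C_def)
  have iv_C: "iv a \<in> C" if "a \<in> C" for a using CE[OF that] Kinv by (simp add: iv_def C_def)
  have assoc: "mul (mul a b) c = mul a (mul b c)" if "a \<in> C" "b \<in> C" "c \<in> C" for a b c
    using CE[OF that(1)] CE[OF that(2)] CE[OF that(3)]
    by (cases "snd a"; cases "snd b"; simp add: mul_def field_simps)
  have lone: "mul one a = a" if "a \<in> C" for a by (simp add: mul_def one_def)
  have linv: "mul (iv a) a = one" if "a \<in> C" for a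
    using CE[OF that] by (simp add: mul_def iv_def one_def)
  have fin: "finite (incidence_vertices :: ('a^'n) set set)" by (rule finite_subset[OF subset_UNIV]) simp
  have piC: "\<pi> ` C = incidence_vertices"
  proof (rule Set.set_eqI, rule iffI)
    fix U assume "U \<in> \<pi> ` C"
    then obtain a where a: "a \<in> C" "U = \<pi> a" by auto
    then show "U \<in> incidence_vertices"
      using pt[OF a(1)] hy[OF a(1)] by (cases "snd a") (auto simp: incidence_vertices_def n_def)
  next
    fix U assume "U \<in> (incidence_vertices :: ('a^'n) set set)"
    then have U: "vec.subspace U" "vec.dim U = 1 \<or> vec.dim U = n - 1"
      by (auto simp: incidence_vertices_def n_def)
    show "U \<in> \<pi> ` C"
    proof (cases "vec.dim U = 1")
      case True
      then obtain v where v: "v \<noteq> 0" "U = line v" using dim1_line U(1) by blast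
      define a where "a = (inverse (\<phi> v), False)"
      have "a \<in> C" using v \<phi>K Kinv \<phi>eq0 by (simp add: a_def C_def)
      moreover have "\<pi> a = U" using v by (simp add: a_def \<pi>_def \<psi>\<phi>)
      ultimately show ?thesis by blast
    next
      case False
      then have "vec.dim U = CARD('n) - 1" using U(2) by (simp add: n_def)
      then obtain w where w: "w \<noteq> 0" "U = kerf w" using dimn1_kerf U(1) by blast
      obtain y where y: "y \<in> K" "\<Psi> y = w" using \<Psi>surj by (metis UNIV_I imageE)
      then have "y \<noteq> 0" using w \<Psi>0 by auto
      then have "(y, True) \<in> C" using y by (simp add: C_def)
      moreover have "\<pi> (y, True) = U" using y w by (simp add: \<pi>_def)
      ultimately show ?thesis by blast
    qed
  qed
  have compat: "\<pi> (mul x y) = \<pi> (mul x' y')"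
    if H: "x\<in>C" "x'\<in>C" "y\<in>C" "y'\<in>C" "\<pi> x = \<pi> x'" "\<pi> y = \<pi> y'" for x x' y y'
  proof -
    obtain c where c: "c \<noteq> 0" "fst x' = to_ac c * fst x" and sx: "snd x = snd x'"
      using char1[OF H(1,2,5)] by blast
    obtain d where d: "d \<noteq> 0" "fst y' = to_ac d * fst y" and sy: "snd y = snd y'"
      using char1[OF H(3,4,6)] by blast
    define k where "k = (if snd x then c / d else c * d)"
    have k0: "k \<noteq> 0" using c d by (simp add: k_def)
    have nz: "fst y \<noteq> 0" "to_ac d \<noteq> 0" using CE[OF H(3)] d by auto
    have "fst (mul x' y') = to_ac k * fst (mul x y)"
      using c d sx nz by (simp add: mul_def k_def to_ac_divide field_simps)
    moreover have "snd (mul x y) = snd (mul x' y')" using sx sy by (simp add: mul_def)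
    ultimately show ?thesis using char2[OF closed[OF H(1,3)] _ k0] by simp
  qed
  have SC: "S \<subseteq> C" by (auto simp: S_def C_def)
  have one_S: "\<pi> one \<notin> \<pi> ` S"
  proof
    assume "\<pi> one \<in> \<pi> ` S"
    then obtain s where "s \<in> S" "\<pi> one = \<pi> s" by auto
    then show False using char1[OF one_C _ \<open>\<pi> one = \<pi> s\<close>] SC by (auto simp: one_def S_def)
  qed
  have S_inv: "\<pi> (iv s) \<in> \<pi> ` S" if "s \<in> S" for s
  proof -
    have "iv s = s" using that by (cases s) (simp add: S_def iv_def)
    then show ?thesis using that by simp
  qed
  have kern: "\<exists>d'. d' \<in> K \<and> d' \<noteq> 0 \<and> T d' = 0 \<and> T (z * d') = 0" if z: "z \<in> K" "z \<noteq> 0" for z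
  proof -
    have "\<Psi> 1 \<noteq> 0" using \<Psi>eq0 K1 by force
    moreover have "\<Psi> z \<noteq> 0" using \<Psi>eq0 z by blast
    ultimately obtain v where v: "v \<noteq> 0" "dotf (\<Psi> 1) v = 0" "dotf (\<Psi> z) v = 0"
      using two_kernels[OF n3] by blast
    have "T (1 * \<phi> v) = 0" using T\<Psi>[OF K1] v by simp
    moreover have "T (z * \<phi> v) = 0" using T\<Psi>[OF z(1)] v by simp
    moreover have "\<phi> v \<noteq> 0" using v \<phi>eq0 by simp
    ultimately show ?thesis using \<phi>K by auto
  qed
  have gen: "\<exists>ss. set ss \<subseteq> S \<and> \<pi> x = \<pi> (foldr mul ss one)" if xC: "x \<in> C" for x
  proof (cases "snd x")
    case False
    define z where "z = fst x"
    have z: "z \<in> K" "z \<noteq> 0" using CE[OF xC] by (simp_all add: z_def)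
    obtain d' where d': "d' \<in> K" "d' \<noteq> 0" "T d' = 0" "T (z * d') = 0" using kern[OF z] by blast
    define ss where "ss = [(z * d', True), (d', True)]"
    have "set ss \<subseteq> S" using d' z Kmult by (simp add: ss_def S_def)
    moreover have "foldr mul ss one = x" using d' False
      by (simp add: ss_def mul_def one_def z_def prod_eq_iff)
    ultimately show ?thesis by metis
  next
    case True
    obtain d0 where d0: "d0 \<in> K" "d0 \<noteq> 0" "T d0 = 0" using kern[OF K1] by auto
    define z where "z = fst x / d0"
    have z: "z \<in> K" "z \<noteq> 0" using CE[OF xC] d0 Kdiv by (simp_all add: z_def)
    obtain d' where d': "d' \<in> K" "d' \<noteq> 0" "T d' = 0" "T (z * d') = 0" using kern[OF z] by blast
    define ss where "ss = [(z * d', True), (d', True), (d0, True)]"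
    have "set ss \<subseteq> S" using d' z d0 Kmult by (simp add: ss_def S_def)
    moreover have "foldr mul ss one = x" using d' d0 True
      by (simp add: ss_def mul_def one_def z_def prod_eq_iff)
    ultimately show ?thesis by metis
  qed
  have inS: "\<pi> c \<in> \<pi> ` S \<longleftrightarrow> snd c \<and> T (fst c) = 0" if cC: "c \<in> C" for c
  proof
    assume "\<pi> c \<in> \<pi> ` S"
    then obtain s where s: "s \<in> S" "\<pi> s = \<pi> c" by auto
    then have sC: "s \<in> C" using SC by auto
    obtain k where "snd s = snd c" "fst c = to_ac k * fst s" using char1[OF sC cC s(2)] by blast
    moreover have "T (to_ac k * fst s) = k * T (fst s)" using Tsc sC CE by blast
    ultimately show "snd c \<and> T (fst c) = 0" using s by (simp add: S_def)
  next
    assume "snd c \<and> T (fst c) = 0"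
    then have "c \<in> S" using CE[OF cC] by (simp add: S_def)
    then show "\<pi> c \<in> \<pi> ` S" by blast
  qed
  have incl: "\<pi> a \<subseteq> \<pi> b \<longleftrightarrow> T (fst b * inverse (fst a)) = 0"
    if ab: "a \<in> C" "b \<in> C" "\<not> snd a" "snd b" for a b
  proof -
    have "\<pi> a \<subseteq> \<pi> b \<longleftrightarrow> \<psi> (inverse (fst a)) \<in> kerf (\<Psi> (fst b))"
      using ab by (simp add: \<pi>_def line_sub kerf_subspace)
    also have "\<dots> \<longleftrightarrow> T (fst b * \<phi> (\<psi> (inverse (fst a)))) = 0"
      using T\<Psi> CE[OF ab(2)] by (simp add: kerf_def)
    also have "\<phi> (\<psi> (inverse (fst a))) = inverse (fst a)" using CE[OF ab(1)] Kinv \<phi>\<psi> by blast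
    finally show ?thesis .
  qed
  have adj: "incidence_adj (\<pi> x) (\<pi> y) \<longleftrightarrow> \<pi> (mul (iv x) y) \<in> \<pi> ` S" if xy: "x\<in>C" "y\<in>C" for x y
  proof -
    have mC: "mul (iv x) y \<in> C" using closed iv_C xy by blast
    have R: "\<pi> (mul (iv x) y) \<in> \<pi> ` S \<longleftrightarrow> snd (mul (iv x) y) \<and> T (fst (mul (iv x) y)) = 0"
      by (rule inS[OF mC])
    have n1': "CARD('n) - 1 \<noteq> 1" using n1 by (simp add: n_def)
    show ?thesis
    proof (cases "snd x")
      case True
      note hx = hy[OF xy(1) True]
      show ?thesis
      proof (cases "snd y")
        case True
        then show ?thesis using hx hy[OF xy(2) True] R n1' \<open>snd x\<close>
          by (simp add: incidence_adj_def mul_def iv_def n_def)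
      next
        case False
        have "incidence_adj (\<pi> x) (\<pi> y) \<longleftrightarrow> \<pi> y \<subseteq> \<pi> x"
          using hx pt[OF xy(2) False] n1' by (auto simp: incidence_adj_def n_def)
        also have "\<dots> \<longleftrightarrow> T (fst x * inverse (fst y)) = 0" using incl[OF xy(2,1) False \<open>snd x\<close>] .
        finally show ?thesis using R False \<open>snd x\<close> by (simp add: mul_def iv_def divide_inverse)
      qed
    next
      case False
      note px = pt[OF xy(1) False]
      show ?thesis
      proof (cases "snd y")
        case True
        have "incidence_adj (\<pi> x) (\<pi> y) \<longleftrightarrow> \<pi> x \<subseteq> \<pi> y"
          using px hy[OF xy(2) True] n1' by (auto simp: incidence_adj_def n_def)
        also have "\<dots> \<longleftrightarrow> T (fst y * inverse (fst x)) = 0" using incl[OF xy False True] .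
        finally show ?thesis using R True \<open>\<not> snd x\<close> by (simp add: mul_def iv_def mult.commute)
      next
        case False
        then show ?thesis using px pt[OF xy(2) False] R n1' \<open>\<not> snd x\<close>
          by (simp add: incidence_adj_def mul_def iv_def n_def)
      qed
    qed
  qed
  show ?thesis
    by (rule quotient_cayley[where C=C and mul=mul and one=one and iv=iv and \<pi>=\<pi> and S=S,
          OF closed one_C iv_C assoc lone linv fin piC compat SC one_S S_inv gen adj])
qed

theorem mainTheorem6:
  assumes "CARD('n::finite) \<ge> 3"
  shows "is_cayley_graph (incidence_vertices :: ('a::{finite,field} ^ 'n) set set) incidence_adj"
  by (rule main_thm[OF assms])

end
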